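(* Let $d_t(n)=PPL_t(n+1)-PPL_t(n)$ for $n\geq 0$. Then $d_t(n)\in\{-1,0,1\}$ for all $n$, and the sequence $(d_t(n))_{n\geq 0}$ is the fixed point (starting with $1$) of the $4$-uniform morphism $\delta$ on the alphabet $\{-1,0,1\}$ given by \[\delta(1)=(1,1,0,-1),\quad \delta(0)=(1,1,-1,-1),\quad \delta(-1)=(1,0,-1,-1);\] that is, $(d_t(4n),d_t(4n+1),d_t(4n+2),d_t(4n+3))=\delta(d_t(n))$ for all $n\geq 0$, and $d_t(0)=1$.
   Context: The Thue-Morse word $t=t[1]t[2]\cdots=abbabaabbaababba\cdots$ is the fixed point starting with $a$ of the morphism $a\mapsto abba,\ b\mapsto baab$. A palindrome is a word $p=p[1]\cdots p[n]$ with $p[i]=p[n-i+1]$ for all $i$. $PPL_t(n)$ is the minimal number of nonempty palindromes whose concatenation equals the prefix of $t$ of length $n$, with $PPL_t(0)=0$. *)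

theory Defs
  imports Main
begin

datatype letter = LA | LB

fun tm_morph :: "letter \<Rightarrow> letter list" where
  "tm_morph LA = [LA, LB, LB, LA]"
| "tm_morph LB = [LB, LA, LA, LB]"

definition tm_morph_word :: "letter list \<Rightarrow> letter list" where
  "tm_morph_word w = concat (map tm_morph w)"

text \<open>k-th iterate of the morphism applied to a; each is a prefix of the next,
  and the fixed point t starting with a is their limit.\<close>
fun tm_iter :: "nat \<Rightarrow> letter list" where
  "tm_iter 0 = [LA]"
| "tm_iter (Suc k) = tm_morph_word (tm_iter k)"

text \<open>Prefix of t of length n (tm_iter n has length 4^n \<ge> n).\<close>
definition tm_prefix :: "nat \<Rightarrow> letter list" where
  "tm_prefix n = take n (tm_iter n)"

definition palindrome :: "'a list \<Rightarrow> bool" where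
  "palindrome p \<longleftrightarrow> rev p = p"

definition PPL_t :: "nat \<Rightarrow> nat" where
  "PPL_t n = (LEAST k. \<exists>ps. length ps = k \<and> (\<forall>p\<in>set ps. p \<noteq> [] \<and> palindrome p)
                          \<and> concat ps = tm_prefix n)"

definition d_t :: "nat \<Rightarrow> int" where
  "d_t n = int (PPL_t (n + 1)) - int (PPL_t n)"

definition delta :: "int \<Rightarrow> int list" where
  "delta x = (if x = 1 then [1, 1, 0, -1]
              else if x = 0 then [1, 1, -1, -1]
              else if x = -1 then [1, 0, -1, -1]
              else [])"

end

theory Submission
  imports Defs
begin

fun tmb :: "nat \<Rightarrow> bool" where
  "tmb n = (if n = 0 then False else if even n then tmb (n div 2) else \<not> tmb (n div 2))"

declare tmb.simps[simp del]

lemma tmb_even: "tmb (2*q) = tmb q"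
  by (cases "q = 0") (simp_all add: tmb.simps[of "2*q"] tmb.simps[of 0])

lemma tmb_odd: "tmb (2*q+1) = (\<not> tmb q)"
  apply (subst tmb.simps)
  apply simp
  done

lemma tmb4: "tmb (4*q) = tmb q" "tmb (4*q+1) = (\<not> tmb q)"
  "tmb (4*q+2) = (\<not> tmb q)" "tmb (4*q+3) = tmb q"
proof -
  have a: "4*q = 2*(2*q)" "4*q+1 = 2*(2*q)+1" "4*q+2 = 2*(2*q+1)" "4*q+3 = 2*(2*q+1)+1" by simp_all
  show "tmb (4*q) = tmb q" by (subst a(1), simp only: tmb_even)
  show "tmb (4*q+1) = (\<not> tmb q)" by (subst a(2), simp only: tmb_even tmb_odd)
  show "tmb (4*q+2) = (\<not> tmb q)" by (subst a(3), simp only: tmb_even tmb_odd)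
  show "tmb (4*q+3) = tmb q" by (subst a(4), simp only: tmb_even tmb_odd not_not)
qed

definition tl' :: "nat \<Rightarrow> letter" where
  "tl' n = (if tmb n then LB else LA)"

lemma tl'_inj: "(tl' x = tl' y) = (tmb x = tmb y)"
  by (simp add: tl'_def)

lemma morph_tl: "tm_morph (tl' n) = [tl' (4*n), tl' (4*n+1), tl' (4*n+2), tl' (4*n+3)]"
  by (simp only: tl'_def tmb4) simp

lemma morph_word_tl: "tm_morph_word (map tl' [0..<N]) = map tl' [0..<4*N]"
proof (induction N)
  case 0
  then show ?case by (simp add: tm_morph_word_def)
next
  case (Suc N)
  have e: "4 * Suc N = Suc (Suc (Suc (Suc (4*N))))" by simp
  have "tm_morph_word (map tl' [0..<Suc N]) = tm_morph_word (map tl' [0..<N]) @ tm_morph (tl' N)"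
    by (simp add: tm_morph_word_def)
  also have "\<dots> = map tl' [0..<4*Suc N]"
    unfolding Suc.IH morph_tl e by (simp add: add.commute numeral_3_eq_3 numeral_2_eq_2)
  finally show ?case .
qed

lemma tm_iter_tl: "tm_iter k = map tl' [0..<4^k]"
  proof (induction k)
  case 0
  show ?case by (simp add: tl'_def tmb.simps[of 0])
next
  case (Suc k)
  show ?case using Suc.IH morph_word_tl[of "4^k"] by simp
qed

lemma n_le_4pow: "n \<le> 4^n"
proof -
  have "n < 2^n" by (rule less_exp)
  also have "(2::nat)^n \<le> 4^n" by (rule power_mono) simp_all
  finally show ?thesis by simp
qed

lemma tm_prefix_tl: "tm_prefix n = map tl' [0..<n]"
  unfolding tm_prefix_def tm_iter_tl using n_le_4pow[of n]
  by (simp add: take_map min_def)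


definition pl :: "'a list \<Rightarrow> nat" where
  "pl w = (LEAST k. \<exists>ps. length ps = k \<and> (\<forall>p\<in>set ps. p \<noteq> [] \<and> palindrome p)
                          \<and> concat ps = w)"

lemma concat_singletons: "concat (map (\<lambda>x. [x]) w) = w"
  by (induction w) simp_all

lemma pl_ex: "\<exists>ps. length ps = pl w \<and> (\<forall>p\<in>set ps. p \<noteq> [] \<and> palindrome p) \<and> concat ps = w"
proof -
  have "\<exists>ps. length ps = length w \<and> (\<forall>p\<in>set ps. p \<noteq> [] \<and> palindrome p) \<and> concat ps = w"
    by (rule exI[of _ "map (\<lambda>x. [x]) w"]) (auto simp: palindrome_def concat_singletons)
  then have "\<exists>k. \<exists>ps. length ps = k \<and> (\<forall>p\<in>set ps. p \<noteq> [] \<and> palindrome p) \<and> concat ps = w" by blast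
  then show ?thesis unfolding pl_def by (rule LeastI_ex)
qed

lemma pl_le: "(\<forall>p\<in>set ps. p \<noteq> [] \<and> palindrome p) \<Longrightarrow> concat ps = w \<Longrightarrow> pl w \<le> length ps"
  unfolding pl_def by (rule Least_le) blast

lemma pl_snoc: "s \<noteq> [] \<Longrightarrow> palindrome s \<Longrightarrow> pl (u @ s) \<le> pl u + 1"
proof -
  assume s: "s \<noteq> []" "palindrome s"
  obtain ps where ps: "length ps = pl u" "\<forall>p\<in>set ps. p \<noteq> [] \<and> palindrome p" "concat ps = u"
    using pl_ex by blast
  have "pl (u @ s) \<le> length (ps @ [s])"
    by (rule pl_le) (use ps s in auto)
  then show ?thesis using ps by simp
qed

lemma pl_last: "w \<noteq> [] \<Longrightarrow> \<exists>u s. w = u @ s \<and> s \<noteq> [] \<and> palindrome s \<and> pl w = pl u + 1"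
proof -
  assume w: "w \<noteq> []"
  obtain ps where ps: "length ps = pl w" "\<forall>p\<in>set ps. p \<noteq> [] \<and> palindrome p" "concat ps = w"
    using pl_ex by blast
  have "ps \<noteq> []" using ps w by auto
  then obtain qs s where qs: "ps = qs @ [s]" by (metis rev_exhaust)
  have s: "s \<noteq> []" "palindrome s" using ps qs by auto
  have u: "pl (concat qs) \<le> length qs" by (rule pl_le) (use ps qs in auto)
  have w': "w = concat qs @ s" using ps qs by simp
  have "pl w \<le> pl (concat qs) + 1" using pl_snoc[OF s, of "concat qs"] w' by simp
  moreover have "pl w = length qs + 1" using ps qs by simp
  ultimately have "pl w = pl (concat qs) + 1" using u by simp
  then show ?thesis using w' s by blast
qed

definition P :: "nat \<Rightarrow> nat" where
  "P m = pl (map tl' [0..<m])"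

lemma PPL_P: "PPL_t m = P m"
  unfolding PPL_t_def P_def pl_def tm_prefix_tl ..

definition palI :: "nat \<Rightarrow> nat \<Rightarrow> bool" where
  "palI i m \<longleftrightarrow> (\<forall>k. k < m - i \<longrightarrow> tmb (i+k) = tmb (m-1-k))"

lemma palindrome_palI: "i \<le> m \<Longrightarrow> palindrome (map tl' [i..<m]) = palI i m"
proof -
  assume im: "i \<le> m"
  have "palindrome (map tl' [i..<m]) \<longleftrightarrow> (\<forall>k<m-i. rev (map tl' [i..<m]) ! k = map tl' [i..<m] ! k)"
    unfolding palindrome_def by (simp add: list_eq_iff_nth_eq)
  also have "\<dots> \<longleftrightarrow> (\<forall>k<m-i. tl' (m-1-k) = tl' (i+k))"
  proof -
    have "rev (map tl' [i..<m]) ! k = tl' (m-1-k)" if "k < m-i" for k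
      using that im by (simp add: rev_nth)
    moreover have "map tl' [i..<m] ! k = tl' (i+k)" if "k < m-i" for k
      using that by simp
    ultimately show ?thesis by auto
  qed
  also have "\<dots> \<longleftrightarrow> palI i m" unfolding palI_def tl'_inj by auto
  finally show ?thesis .
qed

lemma P_snoc: "i \<le> m \<Longrightarrow> palI i m \<Longrightarrow> P m \<le> P i + 1"
proof -
  assume im: "i \<le> m" "palI i m"
  show ?thesis
  proof (cases "i = m")
    case True then show ?thesis by simp
  next
    case False
    have e: "map tl' [0..<m] = map tl' [0..<i] @ map tl' [i..<m]"
      using im by (metis map_append le0 upt_add_eq_append le_add_diff_inverse)
    have "map tl' [i..<m] \<noteq> []" using False im by simp
    moreover have "palindrome (map tl' [i..<m])" using palindrome_palI im by blast
    ultimately show ?thesis unfolding P_def e by (rule pl_snoc)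
  qed
qed

lemma P_last: "0 < m \<Longrightarrow> \<exists>i<m. palI i m \<and> P m = P i + 1"
proof -
  assume m: "0 < m"
  obtain u s where us: "map tl' [0..<m] = u @ s" "s \<noteq> []" "palindrome s"
    "pl (map tl' [0..<m]) = pl u + 1"
    using pl_last[of "map tl' [0..<m]"] m by auto
  define i where "i = length u"
  have im: "i < m" using us i_def by (metis length_append length_map length_upt diff_zero
        length_greater_0_conv less_add_same_cancel1)
  have u: "u = map tl' [0..<i]"
    using arg_cong[OF us(1), of "take i"] im i_def by (simp add: take_map)
  have s: "s = map tl' [i..<m]"
    using arg_cong[OF us(1), of "drop i"] im i_def by (simp add: drop_map)
  have "palI i m" using palindrome_palI[of i m] im us(3) s by simp
  moreover have "P m = P i + 1" using us(4) u unfolding P_def by simp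
  ultimately show ?thesis using im by blast
qed

lemma P_P0: "P 0 = 0"
proof -
  have "pl ([]::letter list) \<le> length ([]::letter list list)" by (rule pl_le) auto
  then show ?thesis unfolding P_def by simp
qed

lemma palI_trivial: "palI m (Suc m)" unfolding palI_def by simp

lemma palI_inner: "palI i m \<Longrightarrow> palI (Suc i) (m - 1)"
  unfolding palI_def
proof (intro allI impI)
  fix k assume h: "\<forall>k. k < m - i \<longrightarrow> tmb (i + k) = tmb (m - 1 - k)" "k < m - 1 - Suc i"
  have "Suc k < m - i" using h(2) by simp
  then have "tmb (i + Suc k) = tmb (m - 1 - Suc k)" using h(1) by blast
  moreover have "m - 1 - Suc k = m - 1 - 1 - k" by simp
  ultimately show "tmb (Suc i + k) = tmb (m - 1 - 1 - k)" by simp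
qed

lemma P_up: "P (Suc m) \<le> P m + 1"
  using P_snoc[of m "Suc m"] palI_trivial by simp

lemma P_down: "P m \<le> P (Suc m) + 1"
proof -
  obtain i where i: "i < Suc m" "palI i (Suc m)" "P (Suc m) = P i + 1" using P_last by blast
  show ?thesis
  proof (cases "i = m")
    case True then show ?thesis using i by simp
  next
    case False
    then have "Suc i \<le> m" using i by simp
    moreover have "palI (Suc i) m" using palI_inner[OF i(2)] by simp
    ultimately have "P m \<le> P (Suc i) + 1" by (rule P_snoc)
    then show ?thesis using P_up[of i] i by simp
  qed
qed


lemma tmbE: "n = 2*q \<Longrightarrow> tmb n = tmb q" using tmb_even by simp
lemma tmbO: "n = 2*q+1 \<Longrightarrow> tmb n = (\<not> tmb q)" using tmb_odd by simp

lemma tmb4': "n = 4*Q + s \<Longrightarrow> s < 4 \<Longrightarrow> tmb n = (tmb Q \<noteq> (s = 1 \<or> s = 2))"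
proof -
  assume n: "n = 4*Q + s" "s < 4"
  then consider "s = 0" | "s = 1" | "s = 2" | "s = 3" by linarith
  then show ?thesis
  proof cases
    case 1 then show ?thesis using n tmb4(1)[of Q] by simp
  next
    case 2 then show ?thesis using n tmb4(2)[of Q] by simp
  next
    case 3 then show ?thesis using n tmb4(3)[of Q] by simp
  next
    case 4 then show ?thesis using n tmb4(4)[of Q] by simp
  qed
qed

lemma no3: "\<not> (tmb r = tmb (r+1) \<and> tmb (r+1) = tmb (r+2))"
proof (cases "even r")
  case True
  then obtain q where q: "r = 2*q" by blast
  have "tmb r = tmb q" "tmb (r+1) = (\<not> tmb q)" using tmbE[of r q] tmbO[of "r+1" q] q by auto
  then show ?thesis by auto
next
  case False
  then obtain q where q: "r = 2*q+1" using oddE by blast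
  have "tmb (r+1) = tmb (q+1)" "tmb (r+2) = (\<not> tmb (q+1))"
    using tmbE[of "r+1" "q+1"] tmbO[of "r+2" "q+1"] q by auto
  then show ?thesis by auto
qed

lemma no5: "tmb (r+1) = tmb (r+3) \<Longrightarrow> tmb r = tmb (r+4) \<Longrightarrow> False"
proof (cases "even r")
  case True
  assume h: "tmb (r+1) = tmb (r+3)" "tmb r = tmb (r+4)"
  from True obtain q where q: "r = 2*q" by blast
  have "tmb r = tmb q" "tmb (r+1) = (\<not> tmb q)" "tmb (r+3) = (\<not> tmb (q+1))" "tmb (r+4) = tmb (q+2)"
    using tmbE[of r q] tmbO[of "r+1" q] tmbO[of "r+3" "q+1"] tmbE[of "r+4" "q+2"] q by auto
  then show ?thesis using h no3[of q] by (auto simp: add.assoc)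
next
  case False
  assume h: "tmb (r+1) = tmb (r+3)" "tmb r = tmb (r+4)"
  from False obtain q where q: "r = 2*q+1" using oddE by blast
  have "tmb r = (\<not> tmb q)" "tmb (r+1) = tmb (q+1)" "tmb (r+3) = tmb (q+2)" "tmb (r+4) = (\<not> tmb (q+2))"
    using tmbO[of r q] tmbE[of "r+1" "q+1"] tmbE[of "r+3" "q+2"] tmbO[of "r+4" "q+2"] q by auto
  then show ?thesis using h no3[of q] by (auto simp: add.assoc)
qed

lemma pal_struct: "i < m \<Longrightarrow> palI i m \<Longrightarrow> m = i+1 \<or> (m = i+3 \<and> tmb i = tmb (i+2)) \<or> (i+m) mod 4 = 0"
proof -
  assume im: "i < m" and p: "palI i m"
  have pk: "\<And>k. k < m - i \<Longrightarrow> tmb (i+k) = tmb (m-1-k)" using p unfolding palI_def by blast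
  define L where "L = m - i"
  have mL: "m = i + L" "L > 0" using im L_def by auto
  show ?thesis
  proof (cases "even L")
    case True
    then obtain h where h: "L = 2*h" by blast
    have h1: "h \<ge> 1" using h mL by simp
    have "tmb (i + (h-1)) = tmb (m-1-(h-1))" using pk[of "h-1"] h h1 L_def by simp
    moreover have "m-1-(h-1) = i+h" "i + (h-1) + 1 = i + h" using h h1 mL by simp_all
    ultimately have eq: "tmb (i+(h-1)) = tmb (i+(h-1)+1)" by simp
    have "even (i+h)"
    proof (rule ccontr)
      assume "odd (i+h)"
      then have "even (i+(h-1))" using h1 by simp
      then obtain q where q: "i+(h-1) = 2*q" by blast
      then show False using eq tmbE[of "i+(h-1)" q] tmbO[of "i+(h-1)+1" q] by simp
    qed
    then have "(i+m) mod 4 = 0" using mL h by presburger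
    then show ?thesis by simp
  next
    case False
    then obtain h where h: "L = 2*h+1" using oddE by blast
    consider "h = 0" | "h = 1" | "h \<ge> 2" by linarith
    then show ?thesis
    proof cases
      case 1 then show ?thesis using mL h by simp
    next
      case 2
      have "tmb (i+0) = tmb (m-1-0)" using pk[of 0] im by simp
      moreover have "m - 1 - 0 = i + 2" using mL h 2 by simp
      ultimately show ?thesis using mL h 2 by simp
    next
      case 3
      define r where "r = i + h - 2"
      have a: "tmb (i+(h-1)) = tmb (m-1-(h-1))" using pk[of "h-1"] h L_def by simp
      have b: "tmb (i+(h-2)) = tmb (m-1-(h-2))" using pk[of "h-2"] h L_def by simp
      have e: "i+(h-1) = r+1" "m-1-(h-1) = r+3" "i+(h-2) = r" "m-1-(h-2) = r+4"
        using r_def mL h 3 by simp_all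
      have "tmb (r+1) = tmb (r+3)" using a by (simp only: e)
      moreover have "tmb r = tmb (r+4)" using b by (simp only: e)
      ultimately show ?thesis using no5[of r] by blast
    qed
  qed
qed

lemma mirror_core: "s < 4 \<Longrightarrow> (tmb (4*Q+s) = tmb (4*Q'+(3-s))) = (tmb Q = tmb Q')"
proof -
  assume s: "s < 4"
  have "tmb (4*Q+s) = (tmb Q \<noteq> (s = 1 \<or> s = 2))" using tmb4'[of _ Q s] s by simp
  moreover have "tmb (4*Q'+(3-s)) = (tmb Q' \<noteq> (3-s = 1 \<or> 3-s = 2))" using tmb4'[of _ Q' "3-s"] s by simp
  moreover have "(3-s = 1 \<or> 3-s = 2) = (s = 1 \<or> s = 2)" using s by auto
  ultimately show ?thesis by auto
qed

lemma mirror_back: "(i+m) mod 4 = 0 \<Longrightarrow> i < m \<Longrightarrow> palI (i div 4) ((m+3) div 4) \<Longrightarrow> palI i m"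
proof -
  assume a: "(i+m) mod 4 = 0" "i < m" and p: "palI (i div 4) ((m+3) div 4)"
  define J where "J = i div 4"
  define N where "N = (m+3) div 4"
  have key1: "i + m = 4*(J+N)" using a J_def N_def by presburger
  have key2: "4*J \<le> i" using J_def by presburger
  have key3: "m \<le> 4*N" using N_def by presburger
  note key = key1 key2 key3
  have pq: "\<And>q. q < N - J \<Longrightarrow> tmb (J+q) = tmb (N-1-q)" using p unfolding palI_def J_def N_def by blast
  show ?thesis unfolding palI_def
  proof (intro allI impI)
    fix k assume k: "k < m - i"
    define p where "p = i + k"
    define Q where "Q = p div 4"
    define s where "s = p mod 4"
    have ps: "p = 4*Q + s" "s < 4" using Q_def s_def by simp_all
    have QJ: "J \<le> Q" "Q < N" using key ps p_def k by linarith+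
    have R: "4*(J+N-1-Q) + 4*Q + 4 = i + m" using QJ key by simp
    have mir: "m - 1 - k = 4*(J+N-1-Q) + (3-s)" using R ps p_def k by linarith
    have "tmb (J + (Q-J)) = tmb (N-1-(Q-J))" using pq[of "Q-J"] QJ by simp
    moreover have "J + (Q-J) = Q" "N-1-(Q-J) = J+N-1-Q" using QJ by simp_all
    ultimately have "tmb Q = tmb (J+N-1-Q)" by simp
    then have "tmb (4*Q+s) = tmb (4*(J+N-1-Q)+(3-s))" using mirror_core[OF ps(2)] by blast
    then show "tmb (i + k) = tmb (m - 1 - k)" using mir ps p_def by simp
  qed
qed

lemma mirror_fwd: "(i+m) mod 4 = 0 \<Longrightarrow> i < m \<Longrightarrow> palI i m \<Longrightarrow> palI (i div 4) ((m+3) div 4)"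
proof -
  assume a: "(i+m) mod 4 = 0" "i < m" and p: "palI i m"
  define J where "J = i div 4"
  define N where "N = (m+3) div 4"
  have key1: "i + m = 4*(J+N)" using a J_def N_def by presburger
  have key2: "4*J \<le> i" using J_def by presburger
  have key3: "m \<le> 4*N" using N_def by presburger
  have key4: "i < 4*J+4" using J_def by presburger
  have key5: "4*N < m+4" using N_def by presburger
  note key = key1 key2 key3 key4 key5
  have pk: "\<And>k. k < m - i \<Longrightarrow> tmb (i+k) = tmb (m-1-k)" using p unfolding palI_def by blast
  show ?thesis unfolding palI_def J_def[symmetric] N_def[symmetric]
  proof (intro allI impI)
    fix q assume q: "q < N - J"
    define Q where "Q = J + q"
    define p where "p = (if q = 0 then i else 4*Q)"
    define s where "s = p mod 4"
    have ps: "p = 4*Q + s" "s < 4" using s_def Q_def p_def J_def by auto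
    have pr: "i \<le> p" "p < m" using p_def Q_def key q a by auto
    have "tmb (i + (p-i)) = tmb (m-1-(p-i))" using pk[of "p-i"] pr by simp
    moreover have "i + (p-i) = 4*Q+s" using pr ps by simp
    moreover have R: "4*(J+N-1-Q) + 4*Q + 4 = i + m" using Q_def q key by simp
    moreover have "m-1-(p-i) = 4*(J+N-1-Q)+(3-s)" using R pr ps by linarith
    ultimately have "tmb (4*Q+s) = tmb (4*(J+N-1-Q)+(3-s))" by simp
    then have "tmb Q = tmb (J+N-1-Q)" using mirror_core[OF ps(2)] by blast
    moreover have "J+N-1-Q = N-1-q" using Q_def q by simp
    ultimately show "tmb (J + q) = tmb (N - 1 - q)" using Q_def by simp
  qed
qed


lemma div4s[simp]: "Suc (4*k) div 4 = k" "Suc (Suc (4*k)) div 4 = k" "Suc (Suc (Suc (4*k))) div 4 = k"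
  "Suc (4*k) mod 4 = 1" "Suc (Suc (4*k)) mod 4 = 2" "Suc (Suc (Suc (4*k))) mod 4 = 3"
  "Suc (Suc (Suc (Suc (4*k)))) div 4 = Suc k" "(4*k+3) div 4 = k" "(4*k+3) mod 4 = 3"
  "(4*k+5) div 4 = Suc k" "(4*k+6) div 4 = Suc k"
  by presburger+

definition Rm :: "nat \<Rightarrow> bool" where
  "Rm m \<longleftrightarrow> (m mod 4 = 0 \<longrightarrow> P m = P (m div 4))
     \<and> (m mod 4 = 1 \<longrightarrow> P m = P (m div 4) + 1)
     \<and> (m mod 4 = 2 \<longrightarrow> P m = min (P (m div 4)) (P (m div 4 + 1)) + 2)
     \<and> (m mod 4 = 3 \<longrightarrow> P m = P (m div 4 + 1) + 1)"

lemma Rm0: "Rm (4*k) \<Longrightarrow> P (4*k) = P k" by (simp add: Rm_def)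
lemma Rm1: "Rm (4*k+1) \<Longrightarrow> P (4*k+1) = P k + 1" by (simp add: Rm_def)
lemma Rm2: "Rm (4*k+2) \<Longrightarrow> P (4*k+2) = min (P k) (P (k+1)) + 2" by (simp add: Rm_def)
lemma Rm3: "Rm (4*k+3) \<Longrightarrow> P (4*k+3) = P (k+1) + 1" by (simp add: Rm_def)

lemma P_next_le: "k < n \<Longrightarrow> palI k (n+1) \<Longrightarrow> P n \<le> P (k+1) + 1"
proof (cases "k + 1 = n")
  case True then show ?thesis by simp
next
  case False
  assume kn: "k < n" and p: "palI k (n+1)"
  have "palI (Suc k) n" using palI_inner[OF p] by simp
  then show ?thesis using P_snoc[of "Suc k" n] kn by simp
qed

lemma case0:
  assumes IH: "\<And>k. k < 4*n \<Longrightarrow> Rm k"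
  shows "P (4*n) = P n"
proof (cases "n = 0")
  case True then show ?thesis by simp
next
  case False
  obtain j where j: "j < n" "palI j n" "P n = P j + 1" using P_last[of n] False by auto
  have "palI (4*j) (4*n)" using mirror_back[of "4*j" "4*n"] j by simp
  then have "P (4*n) \<le> P (4*j) + 1" using P_snoc[of "4*j" "4*n"] j by simp
  moreover have "P (4*j) = P j" using IH[of "4*j"] Rm0 j by simp
  ultimately have up: "P (4*n) \<le> P n" using j by simp
  obtain i where i: "i < 4*n" "palI i (4*n)" "P (4*n) = P i + 1" using P_last[of "4*n"] False by auto
  have "P n \<le> P (4*n)"
  proof -
    consider "4*n = i+1" | "4*n = i+3 \<and> tmb i = tmb (i+2)" | "(i+4*n) mod 4 = 0"
      using pal_struct[OF i(1,2)] by metis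
    then show ?thesis
    proof cases
      case 1
      then have e: "i = 4*(n-1)+3" "n - 1 + 1 = n" using False by (cases n; simp)+
      have "P i = P n + 1" using IH[of i] Rm3[of "n-1"] i(1) unfolding e(1)[symmetric] e(2) by simp
      then show ?thesis using i by simp
    next
      case 2
      then have e: "i = 4*(n-1)+1" "i+2 = 4*(n-1)+3" using False by (cases n; simp)+
      have "tmb i = (\<not> tmb (n-1))" unfolding e(1) by (rule tmb4(2))
      moreover have "tmb (i+2) = tmb (n-1)" unfolding e(2) by (rule tmb4(4))
      ultimately show ?thesis using 2 by simp
    next
      case 3
      define k where "k = i div 4"
      have ik: "i = 4*k" using 3 k_def by presburger
      have kn: "k < n" using ik i by simp
      have "palI k n" using mirror_fwd[of i "4*n"] 3 i ik by simp
      then have "P n \<le> P k + 1" using P_snoc[of k n] kn by simp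
      moreover have "P i = P k" using IH[of i] Rm0[of k] ik i by simp
      ultimately show ?thesis using i by simp
    qed
  qed
  then show ?thesis using up by simp
qed

lemma case1:
  assumes IH: "\<And>k. k < 4*n+1 \<Longrightarrow> Rm k"
  shows "P (4*n+1) = P n + 1"
proof -
  have "P (4*n+1) \<le> P (4*n) + 1" using P_up[of "4*n"] by simp
  moreover have "P (4*n) = P n" using IH[of "4*n"] Rm0 by simp
  ultimately have up: "P (4*n+1) \<le> P n + 1" by simp
  obtain i where i: "i < 4*n+1" "palI i (4*n+1)" "P (4*n+1) = P i + 1" using P_last[of "4*n+1"] by auto
  have "P n + 1 \<le> P (4*n+1)"
  proof -
    consider "4*n+1 = i+1" | "4*n+1 = i+3 \<and> tmb i = tmb (i+2)" | "(i+(4*n+1)) mod 4 = 0"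
      using pal_struct[OF i(1,2)] by metis
    then show ?thesis
    proof cases
      case 1
      then have "i = 4*n" by simp
      then show ?thesis using i IH[of "4*n"] Rm0[of n] by simp
    next
      case 2
      then have n1: "n \<ge> 1" by simp
      then have e: "i = 4*(n-1)+2" "n - 1 + 1 = n" using 2 by (cases n; simp)+
      have "P i = min (P (n-1)) (P n) + 2" using IH[of i] Rm2[of "n-1"] i(1) unfolding e(1)[symmetric] e(2) by simp
      moreover have "P n \<le> P (n-1) + 1" using P_up[of "n-1"] n1 by simp
      ultimately show ?thesis using i by simp
    next
      case 3
      define k where "k = i div 4"
      have ik: "i = 4*k+3" using 3 k_def by presburger
      have kn: "k < n" using ik i by simp
      have "palI k (n+1)" using mirror_fwd[of i "4*n+1"] 3 i ik by simp
      then have "P n \<le> P (k+1) + 1" using P_next_le kn by blast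
      moreover have "P i = P (k+1) + 1" using IH[of i] Rm3[of k] ik i by simp
      ultimately show ?thesis using i by simp
    qed
  qed
  then show ?thesis using up by simp
qed

lemma case2:
  assumes IH: "\<And>k. k < 4*n+2 \<Longrightarrow> Rm k"
  shows "P (4*n+2) = min (P n) (P (n+1)) + 2"
proof -
  have "P (4*n+2) \<le> P (4*n+1) + 1" using P_up[of "4*n+1"] by simp
  moreover have "P (4*n+1) = P n + 1" using IH[of "4*n+1"] Rm1 by simp
  ultimately have up1: "P (4*n+2) \<le> P n + 2" by simp
  obtain j where j: "j < n+1" "palI j (n+1)" "P (n+1) = P j + 1" using P_last[of "n+1"] by auto
  have up2: "P (4*n+2) \<le> P (n+1) + 2"
  proof (cases "j = n")
    case True then show ?thesis using up1 j by simp
  next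
    case False
    then have jn: "j < n" using j by simp
    have "palI (4*j+2) (4*n+2)" using mirror_back[of "4*j+2" "4*n+2"] j jn by simp
    then have "P (4*n+2) \<le> P (4*j+2) + 1" using P_snoc[of "4*j+2" "4*n+2"] jn by simp
    moreover have "P (4*j+2) = min (P j) (P (j+1)) + 2" using IH[of "4*j+2"] Rm2 jn by simp
    ultimately show ?thesis using j by simp
  qed
  obtain i where i: "i < 4*n+2" "palI i (4*n+2)" "P (4*n+2) = P i + 1" using P_last[of "4*n+2"] by auto
  have "min (P n) (P (n+1)) + 2 \<le> P (4*n+2)"
  proof -
    consider "4*n+2 = i+1" | "4*n+2 = i+3 \<and> tmb i = tmb (i+2)" | "(i+(4*n+2)) mod 4 = 0"
      using pal_struct[OF i(1,2)] by metis
    then show ?thesis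
    proof cases
      case 1
      then have "i = 4*n+1" by simp
      then show ?thesis using i IH[of "4*n+1"] Rm1[of n] by simp
    next
      case 2
      then have n1: "n \<ge> 1" by simp
      then have e: "i = 4*(n-1)+3" "n - 1 + 1 = n" using 2 by (cases n; simp)+
      have "P i = P n + 1" using IH[of i] Rm3[of "n-1"] i(1) unfolding e(1)[symmetric] e(2) by simp
      then show ?thesis using i by simp
    next
      case 3
      define k where "k = i div 4"
      have ik: "i = 4*k+2" using 3 k_def by presburger
      have kn: "k < n" using ik i by simp
      have pk: "palI k (n+1)" using mirror_fwd[of i "4*n+2"] 3 i ik by simp
      then have "P n \<le> P (k+1) + 1" using P_next_le kn by blast
      moreover have "P (n+1) \<le> P k + 1" using P_snoc[of k "n+1"] pk kn by simp
      moreover have "P i = min (P k) (P (k+1)) + 2" using IH[of i] Rm2[of k] ik i by simp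
      ultimately show ?thesis using i by simp
    qed
  qed
  then show ?thesis using up1 up2 by simp
qed

lemma case3:
  assumes IH: "\<And>k. k < 4*n+3 \<Longrightarrow> Rm k"
  shows "P (4*n+3) = P (n+1) + 1"
proof -
  obtain j where j: "j < n+1" "palI j (n+1)" "P (n+1) = P j + 1" using P_last[of "n+1"] by auto
  have "palI (4*j+1) (4*n+3)" using mirror_back[of "4*j+1" "4*n+3"] j by simp
  then have "P (4*n+3) \<le> P (4*j+1) + 1" using P_snoc[of "4*j+1" "4*n+3"] j by simp
  moreover have "P (4*j+1) = P j + 1" using IH[of "4*j+1"] Rm1 j by simp
  ultimately have up: "P (4*n+3) \<le> P (n+1) + 1" using j by simp
  obtain i where i: "i < 4*n+3" "palI i (4*n+3)" "P (4*n+3) = P i + 1" using P_last[of "4*n+3"] by auto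
  have "P (n+1) + 1 \<le> P (4*n+3)"
  proof -
    consider "4*n+3 = i+1" | "4*n+3 = i+3 \<and> tmb i = tmb (i+2)" | "(i+(4*n+3)) mod 4 = 0"
      using pal_struct[OF i(1,2)] by metis
    then show ?thesis
    proof cases
      case 1
      then have "i = 4*n+2" by simp
      then have "P i = min (P n) (P (n+1)) + 2" using i IH[of "4*n+2"] Rm2[of n] by simp
      moreover have "P (n+1) \<le> P n + 1" using P_up[of n] by simp
      ultimately show ?thesis using i by simp
    next
      case 2
      then have e: "i = 4*n" "i+2 = 4*n+2" by simp_all
      have "tmb i = tmb n" unfolding e(1) by (rule tmb4(1))
      moreover have "tmb (i+2) = (\<not> tmb n)" unfolding e(2) by (rule tmb4(3))
      ultimately show ?thesis using 2 by simp
    next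
      case 3
      define k where "k = i div 4"
      have ik: "i = 4*k+1" using 3 k_def by presburger
      have kn: "k < n+1" using ik i by simp
      have pk: "palI k (n+1)" using mirror_fwd[of i "4*n+3"] 3 i ik by simp
      have "P (n+1) \<le> P k + 1" using P_snoc[of k "n+1"] pk kn by simp
      moreover have "P i = P k + 1" using IH[of i] Rm1[of k] ik i by simp
      ultimately show ?thesis using i by simp
    qed
  qed
  then show ?thesis using up by simp
qed

lemma all_Rm: "Rm m"
proof (induction m rule: less_induct)
  case (less m)
  define n where "n = m div 4"
  have "m mod 4 < 4" by simp
  then have "m mod 4 = 0 \<or> m mod 4 = 1 \<or> m mod 4 = 2 \<or> m mod 4 = 3" by linarith
  moreover have "m = 4*n + m mod 4" using n_def by simp
  ultimately consider "m = 4*n" | "m = 4*n+1" | "m = 4*n+2" | "m = 4*n+3" by fastforce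
  then show ?case
  proof cases
    case 1
    have "P (4*n) = P n" by (rule case0) (use less 1 in auto)
    then show ?thesis unfolding Rm_def using 1 by simp
  next
    case 2
    have "P (4*n+1) = P n + 1" by (rule case1) (use less 2 in auto)
    then show ?thesis unfolding Rm_def using 2 by simp
  next
    case 3
    have "P (4*n+2) = min (P n) (P (n+1)) + 2" by (rule case2) (use less 3 in auto)
    then show ?thesis unfolding Rm_def using 3 by simp
  next
    case 4
    have "P (4*n+3) = P (n+1) + 1" by (rule case3) (use less 4 in auto)
    then show ?thesis unfolding Rm_def using 4 by simp
  qed
qed

lemma d_P: "d_t n = int (P (n+1)) - int (P n)"
  unfolding d_t_def PPL_P ..

theorem corollary13:
  shows "(\<forall>n. d_t n \<in> {-1, 0, 1})
       \<and> d_t 0 = 1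
       \<and> (\<forall>n. [d_t (4*n), d_t (4*n+1), d_t (4*n+2), d_t (4*n+3)] = delta (d_t n))"
proof (intro conjI allI)
  fix n
  have "P (Suc n) \<le> P n + 1" "P n \<le> P (Suc n) + 1" using P_up P_down by auto
  then show "d_t n \<in> {-1, 0, 1}" unfolding d_P by auto
next
  have "P 1 = P 0 + 1" using Rm1[of 0] all_Rm[of 1] by simp
  then show "d_t 0 = 1" unfolding d_P using P_P0 by simp
next
  fix n
  have a: "P (4*n) = P n" "P (4*n+1) = P n + 1" "P (4*n+2) = min (P n) (P (n+1)) + 2"
    "P (4*n+3) = P (n+1) + 1"
    using Rm0 Rm1 Rm2 Rm3 all_Rm by auto
  have a5: "P (4*(n+1)) = P (n+1)" using Rm0 all_Rm by blast
  have "P (4*n+4) = P (n+1)" using a5 by (simp add: add.commute)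
  note a = a this
  have b: "P (Suc n) \<le> P n + 1" "P n \<le> P (Suc n) + 1" using P_up P_down by auto
  have e: "4*n+1+1 = 4*n+2" "4*n+2+1 = 4*n+3" "4*n+3+1 = 4*n+4" by simp_all
  show "[d_t (4*n), d_t (4*n+1), d_t (4*n+2), d_t (4*n+3)] = delta (d_t n)"
    unfolding d_P e using a b by (auto simp: delta_def min_def)
qed

end
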